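(* The set of those $A\in\mathcal X$ for which there exist linearly independent $v_1,\dots,v_n\in\mathbb Z^n$ with $\mathcal S_1(A)=\{\pm v_1,\dots,\pm v_n\}$ is dense in $\mathcal X$.
   Context: $S_n=\mathrm{SO}_n\backslash\mathrm{SL}_n\mathbb R$; a point is represented by $A\in\mathrm{SL}_n\mathbb R$ up to left multiplication by $\mathrm{SO}_n$, with its usual topology. $\mathrm{syst}_1(A)=\min_{v\in\mathbb Z^n\setminus\{0\}}|Av|$, $\mathcal S_1(A)=\{v\in\mathbb Z^n:|Av|=\mathrm{syst}_1(A)\}$. $A$ is well-rounded if $\mathcal S_1(A)$ spans $\mathbb R^n$; $\mathcal X\subset S_n$ is the set of well-rounded points. *)

theory Defs
  imports "HOL-Analysis.Analysis"
begin

definition Zn :: "(real^'n) set" where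
  "Zn = {v. \<forall>i. v $ i \<in> \<int>}"

definition SLn :: "(real^'n^'n) set" where
  "SLn = {A. det A = 1}"

definition SOn :: "(real^'n^'n) set" where
  "SOn = {Q. orthogonal_matrix Q \<and> det Q = 1}"

text \<open>The point of S_n = SO_n \ SL_n R represented by A: its orbit under left multiplication.\<close>
definition orbitSO :: "real^'n^'n \<Rightarrow> (real^'n^'n) set" where
  "orbitSO A = {Q ** A | Q. Q \<in> SOn}"

definition Sn :: "(real^'n^'n) set set" where
  "Sn = orbitSO ` SLn"

text \<open>Quotient topology on S_n induced by the orbit map from SL_n R (subspace topology).\<close>
definition Sn_top :: "(real^'n^'n) set topology" where
  "Sn_top = topology (\<lambda>U. U \<subseteq> Sn \<and>
      openin (top_of_set SLn) {A \<in> SLn. orbitSO A \<in> U})"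

definition syst1 :: "real^'n^'n \<Rightarrow> real" where
  "syst1 A = Inf {norm (A *v v) | v. v \<in> Zn \<and> v \<noteq> 0}"

definition S1 :: "real^'n^'n \<Rightarrow> (real^'n) set" where
  "S1 A = {v \<in> Zn. norm (A *v v) = syst1 A}"

definition well_rounded :: "real^'n^'n \<Rightarrow> bool" where
  "well_rounded A \<longleftrightarrow> span (S1 A) = UNIV"

text \<open>The set \<X> of well-rounded points of S_n (syst1, S1 are SO_n-invariant).\<close>
definition WR :: "(real^'n^'n) set set" where
  "WR = {orbitSO A | A. A \<in> SLn \<and> well_rounded A}"

end

theory Submission
  imports Defs
begin



lemma comb_lemma:
  fixes F :: "(real^'n) set"
  shows "dim F = k \<Longrightarrow> finite F \<Longrightarrow> (\<forall>x\<in>F. -x \<in> F) \<Longrightarrow> 0 \<notin> F \<Longrightarrow>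
    (\<forall>x\<in>F. \<forall>y\<in>F. \<forall>t. y = t *\<^sub>R x \<longrightarrow> t = 1 \<or> t = -1) \<Longrightarrow>
   \<exists>B\<subseteq>F. independent B \<and> span B = span F \<and>
      (\<exists>S. linear S \<and> (\<forall>w\<in>B. w \<bullet> S w = 0) \<and> (\<forall>x\<in>F. x \<notin> B \<longrightarrow> -x \<notin> B \<longrightarrow> 0 < x \<bullet> S x))"
proof (induction k arbitrary: F)
  case 0
  then have "F = {}" using dim_eq_0 by blast
  then show ?case
    by (intro exI[of _ "{}"]) (auto intro: exI[of _ "\<lambda>x. 0"] simp: linear_zero independent_empty)
next
  case (Suc k)
  note fin = Suc.prems(2) and sym = Suc.prems(3) and nz = Suc.prems(4) and par = Suc.prems(5)
  obtain B0 where B0: "B0 \<subseteq> F" "independent B0" "F \<subseteq> span B0"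
    using maximal_independent_subset by blast
  have spB0: "span B0 = span F"
    using B0 by (metis span_mono span_span subset_antisym span_minimal subspace_span)
  have cardB0: "card B0 = Suc k"
    using dim_eq_card[OF spB0 B0(2)] Suc.prems(1) by argo
  then obtain w0 where w0: "w0 \<in> B0" by fastforce
  define H0 where "H0 = B0 - {w0}"
  have finB0: "finite B0" using B0(1) fin finite_subset by blast
  have indH0: "independent H0" using B0(2) H0_def by (metis Diff_subset independent_mono)
  have cardH0: "card H0 = k" using cardB0 w0 finB0 H0_def by simp
  have w0H0: "w0 \<notin> span H0"
  proof -
    have "w0 \<notin> span (B0 - {w0})" using B0(2) w0 by (meson dependent_def)
    then show ?thesis unfolding H0_def by simp
  qed
  have B0eq: "B0 = insert w0 H0" using w0 unfolding H0_def by auto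
  define F' where "F' = F \<inter> span H0"
  have H0F': "H0 \<subseteq> F'" using B0(1) span_superset[of H0] unfolding F'_def H0_def by auto
  have spF': "span F' = span H0"
  proof
    show "span F' \<subseteq> span H0" unfolding F'_def by (simp add: span_minimal)
    show "span H0 \<subseteq> span F'" using H0F' by (simp add: span_mono)
  qed
  have dimF': "dim F' = k"
    using dim_eq_card[OF spF'[symmetric] indH0] cardH0 by simp
  obtain B' S' where B': "B' \<subseteq> F'" "independent B'" "span B' = span F'"
    and S': "linear S'" "\<forall>w\<in>B'. w \<bullet> S' w = 0" "\<forall>x\<in>F'. x \<notin> B' \<longrightarrow> -x \<notin> B' \<longrightarrow> 0 < x \<bullet> S' x"
  proof -
    have h1: "finite F'" using fin F'_def by simp
    have h2: "\<forall>x\<in>F'. -x \<in> F'" using sym span_neg unfolding F'_def by auto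
    have h3: "0 \<notin> F'" using nz unfolding F'_def by auto
    have h4: "\<forall>x\<in>F'. \<forall>y\<in>F'. \<forall>t. y = t *\<^sub>R x \<longrightarrow> t = 1 \<or> t = -1" using par unfolding F'_def by auto
    show ?thesis using Suc.IH[OF dimF' h1 h2 h3 h4] that by blast
  qed
  obtain y u where yu: "y \<in> span H0" "\<And>z. z \<in> span H0 \<Longrightarrow> orthogonal u z" "w0 = y + u"
    using orthogonal_subspace_decomp_exists by metis
  have uH0: "\<And>z. z \<in> span H0 \<Longrightarrow> u \<bullet> z = 0" using yu(2) by (simp add: orthogonal_def)
  have uw0: "u \<bullet> w0 = u \<bullet> u" using yu uH0 by (simp add: inner_add_right)
  have u0: "u \<noteq> 0" using yu w0H0 by auto
  have uu: "u \<bullet> u > 0" using u0 by simp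
  have KF: "z \<in> span H0" if "z \<in> span F" "u \<bullet> z = 0" for z
  proof -
    have "z \<in> span (insert w0 H0)" using that spB0 B0eq by simp
    then obtain t where t: "z - t *\<^sub>R w0 \<in> span H0" using span_breakdown_eq by blast
    have "u \<bullet> (z - t *\<^sub>R w0) = 0" using uH0 t by blast
    then have "t * (u \<bullet> u) = 0" using that(2) uw0 by (simp add: inner_diff_right)
    then have "t = 0" using uu by simp
    then show ?thesis using t by simp
  qed
  define G where "G = {x \<in> F. u \<bullet> x > 0}"
  have finG: "finite G" using fin G_def by simp
  have w0G: "w0 \<in> G" using w0 B0(1) uw0 uu G_def by auto
  define f where "f = (\<lambda>x. norm ((1 / (u \<bullet> x)) *\<^sub>R x))"
  define M where "M = Max (f ` G)"
  have "M \<in> f ` G" unfolding M_def using finG w0G by (intro Max_in) auto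
  then obtain e where eG: "e \<in> G" and eM: "f e = M" by blast
  have emax: "\<And>x. x \<in> G \<Longrightarrow> norm ((1 / (u \<bullet> x)) *\<^sub>R x) \<le> norm ((1 / (u \<bullet> e)) *\<^sub>R e)"
    using eM finG unfolding M_def by (metis Max_ge finite_imageI image_eqI f_def)
  have ue: "u \<bullet> e > 0" and eF: "e \<in> F" using eG G_def by auto
  define pe where "pe = (1 / (u \<bullet> e)) *\<^sub>R e"
  define P where "P = (\<lambda>x. x - ((u \<bullet> x) / (u \<bullet> e)) *\<^sub>R e)"
  have linP: "linear P"
    unfolding linear_iff P_def
    by (auto simp: inner_add_right inner_scaleR_right add_divide_distrib scaleR_add_left algebra_simps)
  have uP: "u \<bullet> P x = 0" for x
    using ue by (simp add: P_def inner_diff_right inner_scaleR_right)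
  have Pe: "P e = 0" using ue by (simp add: P_def)
  have PH: "P x = x" if "u \<bullet> x = 0" for x using that by (simp add: P_def)
  have Pspan: "P x \<in> span H0" if "x \<in> span F" for x
  proof -
    have "P x \<in> span F" unfolding P_def
      using that eF by (intro span_diff span_scale) (auto intro: span_base)
    then show ?thesis using KF uP by blast
  qed
  have Pdecomp: "x = P x + ((u \<bullet> x) / (u \<bullet> e)) *\<^sub>R e" for x by (simp add: P_def)
  define L where "L = (\<lambda>x. - (pe \<bullet> P x))"
  have CL: "0 < L x" if xG: "x \<in> G" and xe: "x \<noteq> e" for x
  proof -
    have ux: "u \<bullet> x > 0" and xF: "x \<in> F" using xG G_def by auto
    define px where "px = (1 / (u \<bullet> x)) *\<^sub>R x"
    have Pxe: "P x = (u \<bullet> x) *\<^sub>R (px - pe)"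
      using ux ue by (simp add: P_def px_def pe_def scaleR_diff_right)
    have "px \<noteq> pe"
    proof
      assume "px = pe"
      then have "(u \<bullet> x) *\<^sub>R px = (u \<bullet> x) *\<^sub>R pe" by simp
      then have xeq: "x = ((u \<bullet> x) / (u \<bullet> e)) *\<^sub>R e" using ux by (simp add: px_def pe_def)
      then have "(u \<bullet> x) / (u \<bullet> e) = 1 \<or> (u \<bullet> x) / (u \<bullet> e) = -1"
        using par xF eF by blast
      moreover have "(u \<bullet> x) / (u \<bullet> e) > 0" using ux ue by simp
      ultimately have "(u \<bullet> x) / (u \<bullet> e) = 1" by linarith
      with xeq xe show False by simp
    qed
    then have "0 < norm (px - pe) ^ 2" by simp
    also have "norm (px - pe) ^ 2 = px \<bullet> px - 2 * (pe \<bullet> px) + pe \<bullet> pe"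
      by (simp add: power2_norm_eq_inner inner_diff_left inner_diff_right inner_commute)
    finally have 1: "0 < px \<bullet> px - 2 * (pe \<bullet> px) + pe \<bullet> pe" .
    have "norm px \<le> norm pe" using emax[OF xG] by (simp add: px_def pe_def)
    then have "px \<bullet> px \<le> pe \<bullet> pe"
      by (metis norm_ge_zero power2_norm_eq_inner power_mono)
    with 1 have "0 < pe \<bullet> pe - pe \<bullet> px" by linarith
    then have "0 < (u \<bullet> x) * (pe \<bullet> pe - pe \<bullet> px)" using ux by simp
    also have "(u \<bullet> x) * (pe \<bullet> pe - pe \<bullet> px) = L x"
      by (simp add: L_def Pxe inner_diff_right algebra_simps)
    finally show ?thesis .
  qed
  have Le: "L e = 0" by (simp add: L_def Pe)
  define K where "K = 1 + (\<Sum>x\<in>G. \<bar>P x \<bullet> S' (P x)\<bar> / ((u \<bullet> x) * L x))"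
  define S where "S = (\<lambda>x. adjoint P (S' (P x)) + (K * L x) *\<^sub>R u)"
  have linL: "linear L"
    unfolding L_def linear_iff using linP by (simp add: linear_add linear_scale inner_add_right)
  have linS: "linear S"
    unfolding S_def
  proof (rule linear_compose_add)
    show "linear (\<lambda>x. adjoint P (S' (P x)))"
      using linear_compose[OF linear_compose[OF linP S'(1)] adjoint_linear[OF linP]]
      by (simp add: o_def)
    show "linear (\<lambda>x. (K * L x) *\<^sub>R u)"
      unfolding linear_iff using linL by (simp add: linear_add linear_scale algebra_simps scaleR_add_left)
  qed
  have TS: "x \<bullet> S x = P x \<bullet> S' (P x) + K * (u \<bullet> x) * L x" for x
    by (simp add: S_def inner_add_right adjoint_works[OF linP] inner_commute)
  have Gpos: "0 < x \<bullet> S x" if xG: "x \<in> G" and xe: "x \<noteq> e" for x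
  proof -
    have ux: "u \<bullet> x > 0" using xG G_def by auto
    define d where "d = (u \<bullet> x) * L x"
    have d: "d > 0" using ux CL[OF xG xe] d_def by simp
    have nn: "0 \<le> \<bar>P y \<bullet> S' (P y)\<bar> / ((u \<bullet> y) * L y)" if "y \<in> G" for y
    proof (cases "y = e")
      case True then show ?thesis by (simp add: Le)
    next
      case False then show ?thesis using CL[OF that] that G_def by auto
    qed
    have "\<bar>P x \<bullet> S' (P x)\<bar> / d \<le> (\<Sum>x\<in>G. \<bar>P x \<bullet> S' (P x)\<bar> / ((u \<bullet> x) * L x))"
      unfolding d_def using finG xG nn by (intro member_le_sum) auto
    then have "\<bar>P x \<bullet> S' (P x)\<bar> / d + 1 \<le> K" by (simp add: K_def)
    then have "(\<bar>P x \<bullet> S' (P x)\<bar> / d + 1) * d \<le> K * d" using d by (intro mult_right_mono) auto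
    moreover have "(\<bar>P x \<bullet> S' (P x)\<bar> / d + 1) * d = \<bar>P x \<bullet> S' (P x)\<bar> + d"
      using d by (simp add: distrib_right)
    ultimately have "\<bar>P x \<bullet> S' (P x)\<bar> + d \<le> K * d" by simp
    then show ?thesis unfolding TS using d by (simp add: d_def mult.assoc)
  qed
  define B where "B = insert e B'"
  have spB': "span B' = span H0" using B'(3) spF' by simp
  have eH0: "e \<notin> span H0" using uH0 ue by fastforce
  have BF: "B \<subseteq> F" using B'(1) eF F'_def B_def by auto
  have indB: "independent B" unfolding B_def using B'(2) eH0 spB' by (simp add: independent_insertI)
  have spB: "span B = span F"
  proof
    show "span B \<subseteq> span F" using BF by (simp add: span_mono)
    have "F \<subseteq> span B"
    proof
      fix x assume "x \<in> F"
      then have "P x \<in> span B" using Pspan spB' B_def span_base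
        by (metis span_mono subset_insertI subsetD)
      moreover have "e \<in> span B" by (simp add: B_def span_base)
      ultimately show "x \<in> span B" by (subst Pdecomp) (intro span_add span_scale)
    qed
    then show "span F \<subseteq> span B" by (simp add: span_minimal)
  qed
  have S0: "\<forall>w\<in>B. w \<bullet> S w = 0"
  proof
    fix w assume "w \<in> B"
    then consider "w = e" | "w \<in> B'" unfolding B_def by blast
    then show "w \<bullet> S w = 0"
    proof cases
      case 1 then show ?thesis using Pe Le by (simp add: TS linear_0[OF S'(1)])
    next
      case 2
      then have "w \<in> span H0" using B'(1) F'_def by auto
      then have "u \<bullet> w = 0" using uH0 by blast
      then show ?thesis using PH S'(2) 2 by (simp add: TS)
    qed
  qed
  have Spos: "\<forall>x\<in>F. x \<notin> B \<longrightarrow> -x \<notin> B \<longrightarrow> 0 < x \<bullet> S x"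
  proof (intro ballI impI)
    fix x assume xF: "x \<in> F" and xB: "x \<notin> B" and mxB: "-x \<notin> B"
    consider "u \<bullet> x = 0" | "u \<bullet> x > 0" | "u \<bullet> x < 0" by linarith
    then show "0 < x \<bullet> S x"
    proof cases
      case 1
      then have "x \<in> span H0" using KF xF span_base by blast
      then have "x \<in> F'" using xF unfolding F'_def by auto
      then have "0 < x \<bullet> S' x" using S'(3) xB mxB unfolding B_def by auto
      then show ?thesis using PH[OF 1] 1 by (simp add: TS)
    next
      case 2
      then have "x \<in> G" "x \<noteq> e" using xF xB G_def B_def by auto
      then show ?thesis using Gpos by blast
    next
      case 3
      then have "-x \<in> G" "-x \<noteq> e" using xF sym mxB G_def B_def by auto
      then have "0 < (-x) \<bullet> S (-x)" using Gpos by blast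
      then show ?thesis using linear_neg[OF linS] by simp
    qed
  qed
  show ?case using BF indB spB S0 Spos linS by blast
qed


lemma deriv_p: "((\<lambda>h. (1 - h^2*a)/(1+h^2*a)) has_real_derivative 0) (at 0)" if "a \<ge> 0" for a :: real
  using that by (auto intro!: derivative_eq_intros simp: add_nonneg_eq_0_iff)

lemma deriv_q: "((\<lambda>h. 2*h/(1+h^2*a)) has_real_derivative 2) (at 0)" if "a \<ge> 0" for a :: real
  using that by (auto intro!: derivative_eq_intros simp: add_nonneg_eq_0_iff)

lemma deriv_phi:
  fixes w z :: "'k::finite \<Rightarrow> real^'m" and c a :: "'k \<Rightarrow> real"
  assumes a: "\<And>l. a l \<ge> 0"
  defines "y \<equiv> \<lambda>h. \<Sum>l\<in>UNIV. c l *\<^sub>R (((1 - h^2*a l)/(1+h^2*a l)) *\<^sub>R w l + (2*h/(1+h^2*a l)) *\<^sub>R z l)"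
  shows "((\<lambda>h. y h \<bullet> y h) has_real_derivative
            (4 * ((\<Sum>l\<in>UNIV. c l *\<^sub>R w l) \<bullet> (\<Sum>l\<in>UNIV. c l *\<^sub>R z l)))) (at 0)"
proof -
  have dy: "(y has_vector_derivative (\<Sum>l\<in>UNIV. c l *\<^sub>R (2 *\<^sub>R z l))) (at 0)"
  proof -
    have "((\<lambda>h. \<Sum>l\<in>UNIV. c l *\<^sub>R (((1 - h^2*a l)/(1+h^2*a l)) *\<^sub>R w l + (2*h/(1+h^2*a l)) *\<^sub>R z l))
       has_vector_derivative (\<Sum>l\<in>UNIV. c l *\<^sub>R ((((1 - 0^2*a l)/(1+0^2*a l)) *\<^sub>R 0 + 0 *\<^sub>R w l)
            + ((2*0/(1+0^2*a l)) *\<^sub>R 0 + 2 *\<^sub>R z l)))) (at 0)"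
      apply (intro has_vector_derivative_sum bounded_linear.has_vector_derivative[OF bounded_linear_scaleR_right]
           has_vector_derivative_add has_vector_derivative_scaleR has_vector_derivative_const)
      using deriv_p[OF a] deriv_q[OF a] by auto
    then show ?thesis unfolding y_def by simp
  qed
  have y0: "y 0 = (\<Sum>l\<in>UNIV. c l *\<^sub>R w l)" unfolding y_def by simp
  have "((\<lambda>h. y h \<bullet> y h) has_vector_derivative
     (y 0 \<bullet> (\<Sum>l\<in>UNIV. c l *\<^sub>R (2 *\<^sub>R z l)) + (\<Sum>l\<in>UNIV. c l *\<^sub>R (2 *\<^sub>R z l)) \<bullet> y 0)) (at 0)"
    by (rule bounded_bilinear.has_vector_derivative[OF bounded_bilinear_inner dy dy])
  moreover have "y 0 \<bullet> (\<Sum>l\<in>UNIV. c l *\<^sub>R (2 *\<^sub>R z l)) + (\<Sum>l\<in>UNIV. c l *\<^sub>R (2 *\<^sub>R z l)) \<bullet> y 0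
      = 4 * ((\<Sum>l\<in>UNIV. c l *\<^sub>R w l) \<bullet> (\<Sum>l\<in>UNIV. c l *\<^sub>R z l))"
  proof -
    have "(\<Sum>l\<in>UNIV. c l *\<^sub>R (2 *\<^sub>R z l)) = 2 *\<^sub>R (\<Sum>l\<in>UNIV. c l *\<^sub>R z l)"
      by (simp add: scaleR_sum_right scaleR_scaleR mult.commute)
    then show ?thesis by (simp add: y0 inner_commute)
  qed
  ultimately show ?thesis
    by (simp add: has_real_derivative_iff_has_vector_derivative)
qed


lemma tendsto_det:
  fixes f :: "'a \<Rightarrow> real^'n^'n"
  assumes "(f \<longlongrightarrow> X) F"
  shows "((\<lambda>x. det (f x)) \<longlongrightarrow> det X) F"
  unfolding det_def
  by (intro tendsto_intros tendsto_vec_nth assms)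

lemma matvec_bound:
  fixes X :: "real^'n^'m" and y :: "real^'n"
  shows "norm (X *v y) \<le> (\<Sum>i\<in>UNIV. \<Sum>j\<in>UNIV. \<bar>X$i$j\<bar>) * norm y"
proof -
  have "norm (X *v y) \<le> (\<Sum>i\<in>UNIV. \<bar>(X *v y)$i\<bar>)" by (rule norm_le_l1_cart)
  also have "\<dots> \<le> (\<Sum>i\<in>UNIV. \<Sum>j\<in>UNIV. \<bar>X$i$j\<bar> * norm y)"
  proof (rule sum_mono)
    fix i
    have "\<bar>(X *v y)$i\<bar> = \<bar>\<Sum>j\<in>UNIV. X$i$j * y$j\<bar>" by (simp add: matrix_vector_mult_def)
    also have "\<dots> \<le> (\<Sum>j\<in>UNIV. \<bar>X$i$j * y$j\<bar>)" by (rule sum_abs)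
    also have "\<dots> \<le> (\<Sum>j\<in>UNIV. \<bar>X$i$j\<bar> * norm y)"
      by (intro sum_mono) (simp add: abs_mult mult_left_mono component_le_norm_cart)
    finally show "\<bar>(X *v y)$i\<bar> \<le> (\<Sum>j\<in>UNIV. \<bar>X$i$j\<bar> * norm y)" .
  qed
  also have "\<dots> = (\<Sum>i\<in>UNIV. \<Sum>j\<in>UNIV. \<bar>X$i$j\<bar>) * norm y"
    by (simp add: sum_distrib_right)
  finally show ?thesis .
qed

lemma finite_Zn_ball: "finite {v \<in> (Zn :: (real^'n) set). norm v \<le> R}"
proof -
  define I where "I = (of_int :: int \<Rightarrow> real) ` {-\<lceil>R\<rceil>..\<lceil>R\<rceil>}"
  have finI: "finite I" unfolding I_def by simp
  have "{v \<in> (Zn :: (real^'n) set). norm v \<le> R} \<subseteq> vec_lambda ` (PiE UNIV (\<lambda>_. I))"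
  proof
    fix v :: "real^'n" assume v: "v \<in> {v \<in> Zn. norm v \<le> R}"
    have "vec_nth v \<in> PiE UNIV (\<lambda>_. I)"
    proof (simp add: PiE_iff, intro allI)
      fix i
      obtain k where k: "v$i = of_int k" using v unfolding Zn_def by (auto elim: Ints_cases)
      have "\<bar>v$i\<bar> \<le> R" using v component_le_norm_cart[of v i] by auto
      then have "\<bar>real_of_int k\<bar> \<le> real_of_int \<lceil>R\<rceil>" using k le_of_int_ceiling[of R] by linarith
      then have "\<bar>k\<bar> \<le> \<lceil>R\<rceil>" by linarith
      then have "k \<in> {-\<lceil>R\<rceil>..\<lceil>R\<rceil>}" by auto
      then show "v$i \<in> I" unfolding I_def k by (rule imageI)
    qed
    then show "v \<in> vec_lambda ` (PiE UNIV (\<lambda>_. I))"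
      using image_eqI[of v vec_lambda "vec_nth v"] by simp
  qed
  moreover have "finite (vec_lambda ` (PiE UNIV (\<lambda>_. I)) :: (real^'n) set)"
    using finI by (intro finite_imageI finite_PiE) auto
  ultimately show ?thesis by (rule finite_subset)
qed

lemma det_scaleR_mat: "det (c *\<^sub>R (X :: real^'n^'n)) = c ^ CARD('n) * det X"
proof -
  have "c *\<^sub>R X = (\<chi> i. c *s X$i)"
    by (simp add: vec_eq_iff scalar_mult_eq_scaleR)
  then show ?thesis using det_rows_mul[of "\<lambda>_. c" "\<lambda>i. X$i"] by simp
qed

lemma colmat_sum:
  fixes f :: "'k::finite \<Rightarrow> real^'m" and c :: "real^'k"
  shows "(\<chi> i l. f l $ i) *v c = (\<Sum>l\<in>UNIV. c$l *\<^sub>R f l)"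
  by (simp add: vec_eq_iff matrix_vector_mult_def sum_component mult.commute)

lemma colmat_axis:
  fixes f :: "'k::finite \<Rightarrow> real^'m" and j :: 'k
  shows "(\<chi> i l. f l $ i) *v axis j 1 = f j"
proof -
  have "(\<Sum>l\<in>UNIV. (axis j 1 :: real^'k)$l *\<^sub>R f l) = f j"
  proof -
    have "(\<Sum>l\<in>UNIV. (axis j 1 :: real^'k)$l *\<^sub>R f l) = (\<Sum>l\<in>UNIV. if l = j then f l else 0)"
      by (intro sum.cong) (auto simp: axis_def)
    also have "\<dots> = f j" by (simp add: sum.delta)
    finally show ?thesis .
  qed
  then show ?thesis by (simp only: colmat_sum)
qed



lemma tendsto_matmul_right:
  fixes f :: "'a \<Rightarrow> real^'n^'m" and Y :: "real^'k^'n"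
  assumes "(f \<longlongrightarrow> X) F"
  shows "((\<lambda>x. f x ** Y) \<longlongrightarrow> X ** Y) F"
proof (rule vec_tendstoI)
  fix i
  show "((\<lambda>x. (f x ** Y) $ i) \<longlongrightarrow> (X ** Y) $ i) F"
  proof (rule vec_tendstoI)
    fix j
    show "((\<lambda>x. (f x ** Y) $ i $ j) \<longlongrightarrow> (X ** Y) $ i $ j) F"
      unfolding matrix_matrix_mult_def by (simp, intro tendsto_intros tendsto_vec_nth assms)
  qed
qed

definition goodset :: "(real^'n^'n) set" where
  "goodset = {A. A \<in> SLn \<and> well_rounded A \<and>
        (\<exists>v :: 'n \<Rightarrow> real^'n. (\<forall>i. v i \<in> Zn) \<and> inj v \<and> independent (range v) \<and>
            S1 A = range v \<union> uminus ` range v)}"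

lemma dense_lemma:
  fixes A :: "real^'n^'n"
  assumes SL: "A \<in> SLn" and wr: "well_rounded A" and e: "e > 0"
  shows "\<exists>A'. A' \<in> goodset \<and> dist A' A < e"
proof -
  have detA: "det A = 1" using SL by (simp add: SLn_def)
  then have "invertible A" by (simp add: invertible_det_nz)
  then obtain Ai where AiA: "Ai ** A = mat 1" and AAi: "A ** Ai = mat 1"
    unfolding invertible_def by blast
  have Ainv1: "Ai *v (A *v x) = x" for x by (simp add: matrix_vector_mul_assoc AiA)
  have Ainv2: "A *v (Ai *v x) = x" for x by (simp add: matrix_vector_mul_assoc AAi)
  have Ainj: "x = y" if "A *v x = A *v y" for x y using Ainv1 that by metis
  have Zn_neg: "- v \<in> Zn" if "v \<in> Zn" for v :: "real^'n" using that by (auto simp: Zn_def)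
  have Zn0: "(0::real^'n) \<in> Zn" by (simp add: Zn_def)
  define m where "m = syst1 A"
  have bdd: "bdd_below {norm (A *v v) | v. v \<in> Zn \<and> v \<noteq> 0}" by (rule bdd_belowI[of _ 0]) auto
  have m_le: "m \<le> norm (A *v v)" if "v \<in> Zn" "v \<noteq> 0" for v
    unfolding m_def syst1_def using that by (intro cInf_lower[OF _ bdd]) auto
  have S1': "S1 A = {v \<in> Zn. norm (A *v v) = m}" by (simp add: S1_def m_def)
  have spanS1: "span (S1 A) = UNIV" using wr by (simp add: well_rounded_def)
  obtain v0 where v0: "v0 \<in> S1 A" "v0 \<noteq> 0"
  proof -
    have "\<not> S1 A \<subseteq> {0}"
    proof
      assume "S1 A \<subseteq> {0}"
      then have "span (S1 A) \<subseteq> span {0}" by (rule span_mono)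
      then have "(UNIV :: (real^'n) set) \<subseteq> {0}" using spanS1 by simp
      moreover have "axis undefined (1::real) \<noteq> (0 :: real^'n)"
        by (metis axis_nth zero_index zero_neq_one)
      ultimately show False by blast
    qed
    then show ?thesis using that by auto
  qed
  have Av0: "A *v v0 \<noteq> 0" using v0 Ainv1[of v0] by (metis matrix_vector_mult_0_right)
  have mpos: "m > 0" using v0 Av0 S1' by auto
  define beta where "beta = (\<Sum>i\<in>UNIV. \<Sum>j\<in>UNIV. \<bar>Ai$i$j\<bar>)"
  have beta0: "beta \<ge> 0" unfolding beta_def by (intro sum_nonneg) auto
  have finA: "finite {v \<in> Zn. norm (A *v v) \<le> R}" for R
  proof (rule finite_subset[OF _ finite_Zn_ball[of "beta * R"]])
    show "{v \<in> Zn. norm (A *v v) \<le> R} \<subseteq> {v \<in> Zn. norm v \<le> beta * R}"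
    proof safe
      fix v :: "real^'n" assume "v \<in> Zn" "norm (A *v v) \<le> R"
      have "norm v = norm (Ai *v (A *v v))" by (simp add: Ainv1)
      also have "\<dots> \<le> beta * norm (A *v v)" unfolding beta_def by (rule matvec_bound)
      also have "\<dots> \<le> beta * R" using \<open>norm (A *v v) \<le> R\<close> beta0 by (simp add: mult_left_mono)
      finally show "norm v \<le> beta * R" .
    qed
  qed
  have S1Zn: "S1 A \<subseteq> Zn" using S1' by auto
  have S10: "0 \<notin> S1 A" using S1' mpos by auto
  have S1neg: "-v \<in> S1 A" if "v \<in> S1 A" for v
    using that S1' Zn_neg by (auto simp: vec.neg)
  have finS1: "finite (S1 A)"
    using finA[of m] by (rule finite_subset[rotated]) (auto simp: S1')
  define F where "F = (\<lambda>v. A *v v) ` S1 A"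
  have finF: "finite F" using finS1 F_def by simp
  have symF: "\<forall>x\<in>F. -x \<in> F"
    unfolding F_def using S1neg by (auto simp: vec.neg[symmetric])
  have nzF: "0 \<notin> F"
    unfolding F_def using S10 Ainv1 by (metis image_iff matrix_vector_mult_0_right)
  have normF: "norm x = m" if "x \<in> F" for x using that S1' F_def by auto
  have parF: "\<forall>x\<in>F. \<forall>y\<in>F. \<forall>t. y = t *\<^sub>R x \<longrightarrow> t = 1 \<or> t = -1"
  proof (intro ballI allI impI)
    fix x y t assume "x \<in> F" "y \<in> F" "y = t *\<^sub>R x"
    then have "m = \<bar>t\<bar> * m" using normF[of x] normF[of y] by simp
    then have "\<bar>t\<bar> = 1" using mpos by simp
    then show "t = 1 \<or> t = -1" by linarith
  qed
  obtain B S where BF: "B \<subseteq> F" and indB: "independent B" and spBF: "span B = span F"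
    and linS: "linear S" and S0: "\<forall>w\<in>B. w \<bullet> S w = 0"
    and Spos: "\<forall>x\<in>F. x \<notin> B \<longrightarrow> -x \<notin> B \<longrightarrow> 0 < x \<bullet> S x"
    using comb_lemma[OF refl finF symF nzF parF] by blast
  have spF: "span F = UNIV"
  proof -
    have "span F = (\<lambda>v. A *v v) ` span (S1 A)"
      unfolding F_def by (rule linear_span_image[OF matrix_vector_mul_linear])
    also have "\<dots> = UNIV" using spanS1 Ainv2 by (metis surj_def)
    finally show ?thesis .
  qed
  have spB: "span B = UNIV" using spBF spF by simp
  have finB: "finite B" using BF finF finite_subset by blast
  have cardB: "card B = CARD('n)"
    using dim_eq_card[of B UNIV] spB indB by simp
  obtain w where bw: "bij_betw w (UNIV :: 'n set) B"
    using finite_same_card_bij[of "UNIV :: 'n set" B] finB cardB by auto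
  have injw: "inj w" and rangew: "range w = B" using bw by (auto simp: bij_betw_def)
  have "\<forall>j. \<exists>v. v \<in> S1 A \<and> w j = A *v v" using rangew BF F_def by blast
  then obtain vv where vv: "\<And>j. vv j \<in> S1 A" "\<And>j. w j = A *v vv j" by metis
  have normw: "norm (w j) = m" for j using normF rangew BF by blast
  define z where "z = (\<lambda>l. S (w l))"
  have wz: "w l \<bullet> z l = 0" for l using S0 rangew z_def by blast
  define W :: "real^'n^'n" where "W = (\<chi> i l. w l $ i)"
  obtain C where CW: "C ** W = mat 1"
  proof -
    have "\<forall>c. (\<Sum>i\<in>UNIV. c i *s column i W) = 0 \<longrightarrow> (\<forall>i. c i = 0)"
    proof (intro allI impI)
      fix c :: "'n \<Rightarrow> real" and i
      assume "(\<Sum>i\<in>UNIV. c i *s column i W) = 0"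
      then have c0: "(\<Sum>i\<in>UNIV. c i *\<^sub>R w i) = 0"
        by (simp add: W_def column_def scalar_mult_eq_scaleR)
      define uu where "uu = (\<lambda>v. c (inv w v))"
      have "(\<Sum>v\<in>B. uu v *\<^sub>R v) = (\<Sum>i\<in>UNIV. uu (w i) *\<^sub>R w i)"
        unfolding rangew[symmetric] using injw by (simp add: sum.reindex)
      also have "\<dots> = 0" using c0 injw by (simp add: uu_def)
      finally have "(\<Sum>v\<in>B. uu v *\<^sub>R v) = 0" .
      then have "\<forall>v\<in>B. uu v = 0" using indB finB dependent_finite by blast
      then show "c i = 0" using rangew injw uu_def by auto
    qed
    then show ?thesis using that matrix_left_invertible_independent_columns by blast
  qed
  have WC: "W ** C = mat 1" using CW matrix_left_right_inverse by blast
  have WCx: "W *v (C *v x) = x" for x by (simp add: matrix_vector_mul_assoc WC)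
  have CWx: "C *v (W *v x) = x" for x by (simp add: matrix_vector_mul_assoc CW)
  have Waxis: "W *v axis j 1 = w j" for j unfolding W_def by (rule colmat_axis)
  define a where "a = (\<lambda>l. (norm (z l))^2 / m^2)"
  have a0: "a l \<ge> 0" for l by (simp add: a_def)
  define u where "u = (\<lambda>l h. ((1 - h^2 * a l) / (1 + h^2 * a l)) *\<^sub>R w l + (2 * h / (1 + h^2 * a l)) *\<^sub>R z l)"
  have unorm: "norm (u l h) = m" for l h
  proof -
    define t where "t = h^2 * a l"
    have t0: "t \<ge> 0" using a0 by (simp add: t_def)
    have zz: "z l \<bullet> z l = a l * m^2" using mpos by (simp add: a_def power2_norm_eq_inner)
    have ww: "w l \<bullet> w l = m^2" using normw by (simp add: power2_norm_eq_inner[symmetric])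
    have "u l h \<bullet> u l h = ((1 - t)/(1+t))^2 * m^2 + (2*h/(1+t))^2 * (a l * m^2)"
      unfolding u_def t_def[symmetric]
      by (simp add: inner_add_left inner_add_right ww zz wz inner_commute[of "z l" "w l"] power2_eq_square mult.assoc mult.commute mult.left_commute)
    also have "\<dots> = ((1 - t)^2 * m^2 + (4 * t) * m^2) / (1+t)^2"
      by (simp add: t_def power_divide add_divide_distrib power2_eq_square mult.assoc mult.commute mult.left_commute)
    also have "(1 - t)^2 * m^2 + (4 * t) * m^2 = (1+t)^2 * m^2" by (simp add: power2_eq_square algebra_simps)
    also have "(1+t)^2 * m^2 / (1+t)^2 = m^2" using t0 by simp
    finally have "norm (u l h)^2 = m^2" by (simp add: power2_norm_eq_inner)
    then show ?thesis using mpos by (metis norm_ge_zero power2_eq_imp_eq less_imp_le)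
  qed
  have u0: "u l 0 = w l" for l by (simp add: u_def)
  define U :: "real \<Rightarrow> real^'n^'n" where "U = (\<lambda>h. \<chi> i l. u l h $ i)"
  define M where "M = (\<lambda>h. U h ** C)"
  have Mw: "M h *v w j = u j h" for h j
  proof -
    have "M h *v w j = U h *v (C *v (W *v axis j 1))" by (simp add: M_def Waxis matrix_vector_mul_assoc)
    also have "\<dots> = u j h" by (simp add: CWx U_def colmat_axis)
    finally show ?thesis .
  qed
  have Mx: "M h *v x = (\<Sum>l\<in>UNIV. (C *v x)$l *\<^sub>R u l h)" for h x
    by (simp add: M_def U_def colmat_sum matrix_vector_mul_assoc[symmetric])
  have xdec: "x = (\<Sum>l\<in>UNIV. (C *v x)$l *\<^sub>R w l)" for x
    using WCx[of x] by (simp add: W_def colmat_sum)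
  have U0: "U 0 = W" by (simp add: U_def W_def u0)
  have M0: "M 0 = mat 1" by (simp add: M_def U0 WC)
  define F0 where "F0 = {x \<in> F. x \<notin> B \<and> -x \<notin> B}"
  have finF0: "finite F0" using finF F0_def by simp
  have E1: "\<forall>\<^sub>F h in at_right 0. m < norm (M h *v x)" if xF0: "x \<in> F0" for x
  proof -
    define c where "c = (\<lambda>l. (C *v x)$l)"
    define y where "y = (\<lambda>h. \<Sum>l\<in>UNIV. c l *\<^sub>R (((1 - h^2*a l)/(1+h^2*a l)) *\<^sub>R w l + (2*h/(1+h^2*a l)) *\<^sub>R z l))"
    have yM: "y h = M h *v x" for h by (simp add: y_def Mx c_def u_def)
    have "((\<lambda>h. y h \<bullet> y h) has_real_derivative
            (4 * ((\<Sum>l\<in>UNIV. c l *\<^sub>R w l) \<bullet> (\<Sum>l\<in>UNIV. c l *\<^sub>R z l)))) (at 0)"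
      unfolding y_def by (rule deriv_phi[OF a0])
    moreover have "(\<Sum>l\<in>UNIV. c l *\<^sub>R w l) = x" using xdec[of x] by (simp add: c_def)
    moreover have "(\<Sum>l\<in>UNIV. c l *\<^sub>R z l) = S x"
    proof -
      have "S x = S (\<Sum>l\<in>UNIV. c l *\<^sub>R w l)" using xdec[of x] by (simp add: c_def)
      also have "\<dots> = (\<Sum>l\<in>UNIV. c l *\<^sub>R z l)"
        by (simp add: linear_sum[OF linS] linear_scale[OF linS] z_def)
      finally show ?thesis by simp
    qed
    ultimately have der: "((\<lambda>h. y h \<bullet> y h) has_real_derivative (4 * (x \<bullet> S x))) (at 0)" by simp
    have "0 < x \<bullet> S x" using xF0 Spos F0_def by auto
    then obtain d where d: "d > 0" "\<forall>h>0. h < d \<longrightarrow> y 0 \<bullet> y 0 < y (0 + h) \<bullet> y (0 + h)"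
      using DERIV_pos_inc_right[OF der] by auto
    have y0: "y 0 \<bullet> y 0 = m^2"
      using yM[of 0] M0 normF[of x] xF0 F0_def by (simp add: dot_square_norm)
    show ?thesis unfolding eventually_at_right_field
    proof (intro exI[of _ d] conjI allI impI)
      show "0 < d" by fact
      fix h :: real assume "0 < h" "h < d"
      then have "m^2 < norm (M h *v x)^2"
        using d(2) y0 yM[of h] by (metis add_0 power2_norm_eq_inner \<open>0 < h\<close> \<open>h < d\<close>)
      then show "m < norm (M h *v x)" using mpos by (metis abs_of_pos power2_less_imp_less norm_ge_zero)
    qed
  qed
  define Val where "Val = insert (m+1) ((\<lambda>v. norm (A *v v)) ` {v \<in> {v \<in> Zn. norm (A *v v) \<le> m + 1}. m < norm (A *v v)})"
  have finVal: "finite Val" unfolding Val_def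
    by (intro finite_insert[THEN iffD2] finite_imageI finite_subset[OF _ finA[of "m+1"]]) auto
  have Valgt: "\<forall>r\<in>Val. m < r" unfolding Val_def by auto
  define g where "g = Min Val - m"
  have "Val \<noteq> {}" unfolding Val_def by simp
  then have "Min Val \<in> Val" using Min_in[OF finVal] by blast
  then have gpos: "g > 0" using Valgt unfolding g_def by auto
  have gap: "m + g \<le> norm (A *v v)" if "v \<in> Zn" "v \<noteq> 0" "v \<notin> S1 A" for v
  proof -
    have "m < norm (A *v v)" using m_le[OF that(1,2)] that(1,3) S1' by force
    show ?thesis
    proof (cases "norm (A *v v) \<le> m + 1")
      case True
      then have "norm (A *v v) \<in> Val" unfolding Val_def using that(1) \<open>m < _\<close> by blast
      then have "Min Val \<le> norm (A *v v)" using Min_le[OF finVal] by blast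
      then show ?thesis unfolding g_def by simp
    next
      case False
      have "m + 1 \<in> Val" unfolding Val_def by simp
      then have "Min Val \<le> m + 1" using Min_le[OF finVal] by blast
      then show ?thesis unfolding g_def using False by simp
    qed
  qed
  have ulim: "((\<lambda>h. u l h) \<longlongrightarrow> w l) (at_right 0)" for l
  proof -
    have "((\<lambda>h. u l h) \<longlongrightarrow> u l 0) (at_right 0)"
      unfolding u_def by (intro tendsto_intros) auto
    then show ?thesis by (simp add: u0)
  qed
  have Ulim: "(U \<longlongrightarrow> W) (at_right 0)"
  proof (rule vec_tendstoI)
    fix i
    show "((\<lambda>h. U h $ i) \<longlongrightarrow> W $ i) (at_right 0)"
    proof (rule vec_tendstoI)
      fix j
      show "((\<lambda>h. U h $ i $ j) \<longlongrightarrow> W $ i $ j) (at_right 0)"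
        unfolding U_def W_def using tendsto_vec_nth[OF ulim[of j], of i] by simp
    qed
  qed
  have Mlim: "(M \<longlongrightarrow> mat 1) (at_right 0)"
    using tendsto_matmul_right[OF Ulim, of C] WC unfolding M_def by simp
  have betalim: "((\<lambda>h. \<Sum>i\<in>UNIV. \<Sum>j\<in>UNIV. \<bar>(M h - mat 1)$i$j\<bar>) \<longlongrightarrow> 0) (at_right 0)"
  proof -
    have "((\<lambda>h. \<Sum>i\<in>UNIV. \<Sum>j\<in>UNIV. \<bar>(M h - mat 1)$i$j\<bar>) \<longlongrightarrow>
          (\<Sum>i\<in>UNIV. \<Sum>j\<in>UNIV. \<bar>(mat 1 - mat 1 :: real^'n^'n)$i$j\<bar>)) (at_right 0)"
      by (intro tendsto_intros tendsto_vec_nth Mlim)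
    then show ?thesis by simp
  qed
  have detlim: "((\<lambda>h. det (M h)) \<longlongrightarrow> 1) (at_right 0)"
    using tendsto_det[OF Mlim] by simp
  define Af where "Af = (\<lambda>h. root CARD('n) (1 / det (M h)) *\<^sub>R (M h ** A))"
  have Aflim: "(Af \<longlongrightarrow> A) (at_right 0)"
  proof -
    have "(Af \<longlongrightarrow> root CARD('n) (1 / 1) *\<^sub>R (mat 1 ** A)) (at_right 0)"
      unfolding Af_def
      by (intro tendsto_scaleR tendsto_real_root tendsto_divide tendsto_const detlim
           tendsto_matmul_right Mlim) auto
    then show ?thesis by simp
  qed
  define bet where "bet = (\<lambda>h. \<Sum>i\<in>UNIV. \<Sum>j\<in>UNIV. \<bar>(M h - mat 1)$i$j\<bar>)"
  have gmg: "g / (m + g) > 0" using gpos mpos by simp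
  have ev1: "\<forall>\<^sub>F h in at_right 0. \<forall>x\<in>F0. m < norm (M h *v x)"
    by (rule eventually_ball_finite[OF finF0]) (use E1 in blast)
  have ev2: "\<forall>\<^sub>F h in at_right 0. bet h < g / (m + g)"
    using order_tendstoD(2)[OF betalim gmg] unfolding bet_def .
  have ev3: "\<forall>\<^sub>F h in at_right 0. det (M h) > 0"
    using order_tendstoD(1)[OF detlim zero_less_one] .
  have ev4: "\<forall>\<^sub>F h in at_right 0. dist (Af h) A < e"
    using tendstoD[OF Aflim e] .
  have ev: "\<forall>\<^sub>F h in at_right 0. (\<forall>x\<in>F0. m < norm (M h *v x)) \<and> bet h < g / (m + g)
              \<and> det (M h) > 0 \<and> dist (Af h) A < e"
    using ev1 ev2 ev3 ev4 by eventually_elim auto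
  then obtain h where hE1: "\<forall>x\<in>F0. m < norm (M h *v x)" and hbet: "bet h < g / (m + g)"
    and hdet: "det (M h) > 0" and hdist: "dist (Af h) A < e"
    using eventually_happens'[OF trivial_limit_at_right_real ev] by blast
  define N where "N = M h"
  define cc where "cc = root CARD('n) (1 / det N)"
  have ncard: "CARD('n) > 0" by simp
  have cc: "cc > 0" unfolding cc_def N_def using hdet ncard by (simp add: real_root_gt_zero)
  define A' where "A' = cc *\<^sub>R (N ** A)"
  have AfA': "Af h = A'" by (simp add: Af_def A'_def cc_def N_def)
  have detA': "det A' = 1"
  proof -
    have "det A' = cc ^ CARD('n) * (det N * det A)" by (simp add: A'_def det_scaleR_mat det_mul)
    also have "cc ^ CARD('n) = 1 / det N" unfolding cc_def using hdet ncard N_def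
      by (simp add: real_root_pow_pos)
    finally show ?thesis using hdet detA N_def by simp
  qed
  have A'v: "A' *v v = cc *\<^sub>R (N *v (A *v v))" for v
    by (simp add: A'_def scaleR_matrix_vector_assoc[symmetric] matrix_vector_mul_assoc)
  have nA': "norm (A' *v v) = cc * norm (N *v (A *v v))" for v using cc by (simp add: A'v)
  define R0 where "R0 = range vv \<union> uminus ` range vv"
  have R0a: "norm (N *v (A *v v)) = m" if "v \<in> R0" for v
  proof -
    from that obtain j where "v = vv j \<or> v = - vv j" unfolding R0_def by auto
    then show ?thesis
    proof
      assume "v = vv j"
      then show ?thesis using vv(2)[of j] Mw[of h j] unorm N_def by simp
    next
      assume "v = - vv j"
      then have "N *v (A *v v) = - u j h" using vv(2)[of j] Mw[of h j] N_def by (simp add: vec.neg)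
      then show ?thesis using unorm by simp
    qed
  qed
  have R0Zn: "R0 \<subseteq> Zn" using vv(1) S1Zn Zn_neg unfolding R0_def by auto
  have R00: "0 \<notin> R0" unfolding R0_def by (auto simp: neg_equal_0_iff_equal) (metis vv(1) S10)+
  have R0b: "m < norm (N *v (A *v v))" if vZ: "v \<in> Zn" and v0': "v \<noteq> 0" and vR: "v \<notin> R0" for v
  proof (cases "v \<in> S1 A")
    case True
    define x where "x = A *v v"
    have xF: "x \<in> F" using True x_def F_def by simp
    have "x \<notin> B"
    proof
      assume "x \<in> B"
      then obtain j where "x = w j" using rangew by blast
      then have "v = vv j" using vv(2)[of j] Ainj x_def by metis
      then show False using vR R0_def by auto
    qed
    moreover have "-x \<notin> B"
    proof
      assume "-x \<in> B"
      then obtain j where "-x = w j" using rangew by blast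
      then have "A *v (-v) = A *v vv j" using vv(2)[of j] x_def by (simp add: vec.neg)
      then have "-v = vv j" using Ainj by blast
      then have "v = - vv j" by (metis minus_minus)
      then show False using vR R0_def by auto
    qed
    ultimately have "x \<in> F0" using xF F0_def by simp
    then show ?thesis using hE1 N_def x_def by simp
  next
    case False
    define y where "y = A *v v"
    have ny: "m + g \<le> norm y" using gap[OF vZ v0' False] y_def by simp
    have bN: "bet h < g / (m + g)" using hbet .
    have nb: "norm ((N - mat 1) *v y) \<le> bet h * norm y"
      unfolding bet_def N_def by (rule matvec_bound)
    have Ny: "N *v y = y + (N - mat 1) *v y"
      by (simp add: matrix_vector_mult_diff_rdistrib)
    have "norm y - bet h * norm y \<le> norm (N *v y)"
    proof -
      have "norm y - norm ((N - mat 1) *v y) \<le> norm (y + (N - mat 1) *v y)" by (rule norm_diff_ineq)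
      then show ?thesis using nb Ny by simp
    qed
    moreover have "m < norm y - bet h * norm y"
    proof -
      have mg: "m + g > 0" using mpos gpos by simp
      have b1: "bet h * (m + g) < g" using bN mg by (simp add: pos_less_divide_eq)
      have "bet h < 1" using bN mg gpos mpos
        by (smt (verit) divide_less_eq_1_pos)
      then have "(1 - bet h) * (m + g) \<le> (1 - bet h) * norm y" using ny by (intro mult_left_mono) auto
      moreover have "m < (1 - bet h) * (m + g)" using b1 by (simp add: algebra_simps)
      ultimately show ?thesis by (simp add: algebra_simps)
    qed
    ultimately show ?thesis using y_def by simp
  qed
  have j0: "vv undefined \<in> R0" unfolding R0_def by simp
  have syst: "syst1 A' = cc * m"
    unfolding syst1_def
  proof (rule cInf_eq_minimum)
    show "cc * m \<in> {norm (A' *v v) |v. v \<in> Zn \<and> v \<noteq> 0}"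
      using j0 R0Zn R00 R0a[OF j0] nA' by (metis (mono_tags, lifting) mem_Collect_eq subsetD)
  next
    fix r assume "r \<in> {norm (A' *v v) |v. v \<in> Zn \<and> v \<noteq> 0}"
    then obtain v where v: "r = norm (A' *v v)" "v \<in> Zn" "v \<noteq> 0" by blast
    show "cc * m \<le> r"
    proof (cases "v \<in> R0")
      case True then show ?thesis using R0a v nA' by simp
    next
      case False then show ?thesis using R0b[OF v(2,3) False] v nA' cc by simp
    qed
  qed
  have S1A': "S1 A' = R0"
  proof
    show "S1 A' \<subseteq> R0"
    proof
      fix v assume "v \<in> S1 A'"
      then have v: "v \<in> Zn" "norm (A' *v v) = cc * m" unfolding S1_def syst by auto
      have "v \<noteq> 0" using v(2) cc mpos by auto
      show "v \<in> R0"
      proof (rule ccontr)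
        assume "v \<notin> R0"
        then have "m < norm (N *v (A *v v))" using R0b v(1) \<open>v \<noteq> 0\<close> by blast
        then show False using v(2) nA' cc by simp
      qed
    qed
    show "R0 \<subseteq> S1 A'"
      using R0Zn R0a nA' unfolding S1_def syst by auto
  qed
  have vvAi: "vv j = Ai *v w j" for j using vv(2) Ainv1 by simp
  have rangevv: "range vv = (\<lambda>x. Ai *v x) ` B" using vvAi rangew by auto
  have injAi: "inj ((*v) Ai)" by (metis Ainv2 injI)
  have indvv: "independent (range vv)"
    unfolding rangevv
    by (rule linear_independent_injective_image[OF matrix_vector_mul_linear indB])
       (use injAi in \<open>auto simp: inj_on_def inj_def\<close>)
  have spvv: "span (range vv) = UNIV"
  proof -
    have "span (range vv) = (\<lambda>x. Ai *v x) ` span B"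
      unfolding rangevv by (rule linear_span_image[OF matrix_vector_mul_linear])
    also have "\<dots> = UNIV" using spB Ainv1 by (metis surj_def)
    finally show ?thesis .
  qed
  have injvv: "inj vv" using injw vv(2) by (metis injD injI)
  have wrA': "well_rounded A'"
    unfolding well_rounded_def S1A' R0_def
    using spvv span_mono[of "range vv" "range vv \<union> uminus ` range vv"] by auto
  have "A' \<in> goodset"
    unfolding goodset_def
    using detA' wrA' S1A' injvv indvv vv(1) S1Zn R0_def
    by (auto simp: SLn_def intro!: exI[of _ vv])
  moreover have "dist A' A < e" using hdist AfA' by simp
  ultimately show ?thesis by blast
qed

lemma istop_Sn: "istopology (\<lambda>U. U \<subseteq> (Sn :: (real^'n^'n) set set) \<and>
      openin (top_of_set SLn) {A \<in> SLn. orbitSO A \<in> U})"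
  unfolding istopology_def
proof (rule conjI; intro allI impI)
  fix S T :: "(real^'n^'n) set set"
  assume S: "S \<subseteq> Sn \<and> openin (top_of_set SLn) {A \<in> SLn. orbitSO A \<in> S}"
    and T: "T \<subseteq> Sn \<and> openin (top_of_set SLn) {A \<in> SLn. orbitSO A \<in> T}"
  have "{A \<in> SLn. orbitSO A \<in> S \<inter> T} = {A \<in> SLn. orbitSO A \<in> S} \<inter> {A \<in> SLn. orbitSO A \<in> T}"
    by auto
  with S T show "S \<inter> T \<subseteq> Sn \<and> openin (top_of_set SLn) {A \<in> SLn. orbitSO A \<in> S \<inter> T}"
    by (auto intro: openin_Int)
next
  fix K :: "(real^'n^'n) set set set"
  assume K: "\<forall>S\<in>K. S \<subseteq> Sn \<and> openin (top_of_set SLn) {A \<in> SLn. orbitSO A \<in> S}"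
  have "{A \<in> SLn. orbitSO A \<in> \<Union>K} = \<Union>((\<lambda>S. {A \<in> SLn. orbitSO A \<in> S}) ` K)"
    by auto
  moreover have "openin (top_of_set SLn) (\<Union>((\<lambda>S. {A \<in> SLn. orbitSO A \<in> S}) ` K))"
    using K by (intro openin_Union) auto
  ultimately show "\<Union>K \<subseteq> Sn \<and> openin (top_of_set SLn) {A \<in> SLn. orbitSO A \<in> \<Union>K}"
    using K by auto
qed

lemma openin_Sn_top: "openin (Sn_top :: (real^'n^'n) set topology) U \<longleftrightarrow>
   U \<subseteq> Sn \<and> openin (top_of_set SLn) {A \<in> SLn. orbitSO A \<in> U}"
  unfolding Sn_top_def by (subst topology_inverse'[OF istop_Sn]) (rule refl)

lemma topspace_Sn_top: "topspace (Sn_top :: (real^'n^'n) set topology) = Sn"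
proof -
  have "openin (Sn_top :: (real^'n^'n) set topology) Sn"
    unfolding openin_Sn_top
  proof
    have "{A \<in> SLn. orbitSO A \<in> (Sn :: (real^'n^'n) set set)} = SLn"
      unfolding Sn_def by auto
    then show "openin (top_of_set SLn) {A \<in> SLn. orbitSO A \<in> (Sn :: (real^'n^'n) set set)}"
      by simp
  qed simp
  then show ?thesis
    by (metis openin_Sn_top openin_subset subset_antisym openin_topspace)
qed

theorem mainTheorem5:
  "subtopology Sn_top WR closure_of
     {orbitSO A | A :: real^'n^'n. A \<in> SLn \<and> well_rounded A \<and>
        (\<exists>v :: 'n \<Rightarrow> real^'n. (\<forall>i. v i \<in> Zn) \<and> inj v \<and> independent (range v) \<and>
            S1 A = range v \<union> uminus ` range v)}
   = WR"
  (is "?X closure_of ?D = WR")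
proof
  show "?X closure_of ?D \<subseteq> WR"
    using closure_of_subset_topspace by fastforce
next
  show "WR \<subseteq> ?X closure_of ?D"
  proof
    fix p :: "(real^'n^'n) set" assume p: "p \<in> WR"
    then obtain A :: "real^'n^'n" where pA: "p = orbitSO A" and A: "A \<in> SLn" "well_rounded A"
      unfolding WR_def by auto
    have pSn: "p \<in> Sn" using pA A unfolding Sn_def by auto
    show "p \<in> ?X closure_of ?D"
      unfolding in_closure_of
    proof (intro conjI allI impI)
      show "p \<in> topspace ?X" using p pSn by (simp add: topspace_Sn_top)
    next
      fix T assume T: "p \<in> T \<and> openin ?X T"
      then obtain U where U: "openin Sn_top U" "T = U \<inter> WR"
        by (auto simp: openin_subtopology)
      then have V: "openin (top_of_set SLn) {B \<in> SLn. orbitSO B \<in> U}"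
        by (simp add: openin_Sn_top)
      have "A \<in> {B \<in> SLn. orbitSO B \<in> U}" using A T U pA by auto
      then obtain e where e: "e > 0" "\<forall>x'\<in>SLn. dist x' A < e \<longrightarrow> x' \<in> {B \<in> SLn. orbitSO B \<in> U}"
        using V unfolding openin_euclidean_subtopology_iff by blast
      obtain A' where A': "A' \<in> goodset" "dist A' A < e"
        using dense_lemma[OF A e(1)] by blast
      have "orbitSO A' \<in> U" using e A' unfolding goodset_def by auto
      moreover have "orbitSO A' \<in> WR" using A' unfolding goodset_def WR_def by auto
      moreover have "orbitSO A' \<in> ?D" using A' unfolding goodset_def by blast
      ultimately show "\<exists>y. y \<in> ?D \<and> y \<in> T" using U by blast
    qed
  qed
qed

end
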